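(* Under the standing setup, for $\theta>0$ let $A_n(\theta)$ be the event that for every vertex $v$ with $|v|=n$, at most one of the variables $\{X_e:e\in I_v\}$ satisfies $|X_e|>b_n\theta/n$. Then for every $\theta>0$, $\lim_{n\to\infty}P^*\big(A_n(\theta)^c\big)=0$.
   Context: Standing setup. Let $\{Z_i\}_{i\ge0}$ be a Galton–Watson process with $Z_0\equiv1$ and offspring variable $Z_1$ with mean $\mu:=E(Z_1)\in(1,\infty)$, satisfying $E(Z_1\log^+Z_1)<\infty$, with genealogical tree rooted at $o$. For a vertex $v$, $|v|$ is its generation and $I_v$ the set of edges of the path from $o$ to $v$. Independently of the tree, attach i.i.d. real random variables $X_e$ to the edges with $P(|X_e|>x)=x^{-\alpha}L(x)$ ($\alpha>0$, $L$ slowly varying) and $P(X_e>x)/P(|X_e|>x)\to p$, $P(X_e<-x)/P(|X_e|>x)\to q$, $p,q\ge0$, $p+q=1$. Let $b_n>0$ satisfy $\mu^nP(b_n^{-1}X_e\in\cdot)\to\nu_\alpha$ vaguely on $[-\infty,\infty]\setminus\{0\}$, with $\nu_\alpha(dx)=\alpha px^{-\alpha-1}\mathbf 1_{(0,\infty)}(x)dx+\alpha q(-x)^{-\alpha-1}\mathbf 1_{(-\infty,0)}(x)dx$. $P^*$ denotes conditioning on survival. *)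

theory Defs
  imports "HOL-Probability.Probability"
begin

text \<open>Ulam--Harris encoding of the Galton--Watson tree.  A vertex is a list of
  natural numbers; the root o is the empty list.  N u w is the number of children
  of vertex u in outcome w.  The edge leading into a non-root vertex v is identified
  with v itself, so the edge set I_v of the path from o to v is
  {take (k+1) v | k < length v}, and |v| = length v.\<close>

definition gw_vertex :: "(nat list \<Rightarrow> 'w \<Rightarrow> nat) \<Rightarrow> 'w \<Rightarrow> nat list \<Rightarrow> bool" where
  "gw_vertex N w v \<longleftrightarrow> (\<forall>k < length v. v ! k < N (take k v) w)"

definition gw_survival :: "(nat list \<Rightarrow> 'w \<Rightarrow> nat) \<Rightarrow> 'w set" where
  "gw_survival N = {w. \<forall>n. \<exists>v. length v = n \<and> gw_vertex N w v}"

definition slowly_varying :: "(real \<Rightarrow> real) \<Rightarrow> bool" where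
  "slowly_varying L \<longleftrightarrow> (\<forall>\<^sub>F x in at_top. L x > 0) \<and>
     (\<forall>c>0. ((\<lambda>x. L (c * x) / L x) \<longlongrightarrow> 1) at_top)"

text \<open>Density of the limit measure nu_alpha on the reals (it has no mass at +-infinity).\<close>
definition nu_alpha_density :: "real \<Rightarrow> real \<Rightarrow> real \<Rightarrow> real \<Rightarrow> real" where
  "nu_alpha_density \<alpha> p q x =
     (if x > 0 then \<alpha> * p * x powr (-\<alpha> - 1)
      else if x < 0 then \<alpha> * q * (-x) powr (-\<alpha> - 1) else 0)"

text \<open>Continuous functions with compact support in [-infinity,infinity] minus {0}:
  continuous on the extended reals and vanishing on a neighbourhood of 0.\<close>
definition cont_compact_supp_away0 :: "(ereal \<Rightarrow> real) \<Rightarrow> bool" where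
  "cont_compact_supp_away0 f \<longleftrightarrow> continuous_on UNIV f \<and>
     (\<exists>\<epsilon>>0. \<forall>y::real. \<bar>y\<bar> < \<epsilon> \<longrightarrow> f (ereal y) = 0)"

definition vague_conv_nu_alpha ::
  "'w measure \<Rightarrow> ('w \<Rightarrow> real) \<Rightarrow> real \<Rightarrow> (nat \<Rightarrow> real) \<Rightarrow> real \<Rightarrow> real \<Rightarrow> real \<Rightarrow> bool" where
  "vague_conv_nu_alpha M X \<mu> b \<alpha> p q \<longleftrightarrow>
     (\<forall>f. cont_compact_supp_away0 f \<longrightarrow>
        ((\<lambda>n. \<mu> ^ n * (\<integral>w. f (ereal (X w / b n)) \<partial>M))
          \<longlonglongrightarrow> (\<integral>x. f (ereal x) * nu_alpha_density \<alpha> p q x \<partial>lborel)))"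

definition A_event :: "(nat list \<Rightarrow> 'w \<Rightarrow> nat) \<Rightarrow> (nat list \<Rightarrow> 'w \<Rightarrow> real) \<Rightarrow> (nat \<Rightarrow> real)
    \<Rightarrow> real \<Rightarrow> nat \<Rightarrow> 'w set" where
  "A_event N X b \<theta> n = {w. \<forall>v. length v = n \<and> gw_vertex N w v \<longrightarrow>
      card {k. k < n \<and> \<bar>X (take (Suc k) v) w\<bar> > b n * \<theta> / real n} \<le> 1}"

end

theory Submission
  imports Defs "HOL-Real_Asymp.Real_Asymp"
begin


lemma poly_exp: fixes mu a :: real assumes "mu > 1" shows "(\<lambda>n. real n powr a / mu^n) \<longlonglongrightarrow> 0"
proof -
  have "ln mu > 0" using assms by simp
  have e: "\<And>n. mu ^ n = exp (real n * ln mu)" using assms by (simp add: exp_of_nat_mult)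
  show ?thesis unfolding e using \<open>ln mu > 0\<close> by real_asymp
qed

lemma choose_k: fixes y K :: real assumes "y \<ge> 1" "K \<ge> 1"
  shows "\<exists>k::nat. y \<le> 2^k \<and> K^k \<le> K * y powr log 2 K"
proof -
  define c where "c = \<lceil>log 2 y\<rceil>"
  have ly: "log 2 y \<ge> 0" using assms by simp
  hence c0: "c \<ge> 0" unfolding c_def by simp
  define k where "k = nat c"
  have kc: "real k = of_int c" using c0 unfolding k_def by simp
  have "y = 2 powr log 2 y" using assms by simp
  also have "\<dots> \<le> 2 powr real k" unfolding kc c_def by (intro powr_mono) auto
  also have "\<dots> = 2^k" by (simp add: powr_realpow)
  finally have 1: "y \<le> 2^k" .
  have "real k \<le> log 2 y + 1" unfolding kc c_def by linarith
  have "K^k = K powr real k" using assms by (simp add: powr_realpow)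
  also have "\<dots> \<le> K powr (log 2 y + 1)" using \<open>real k \<le> log 2 y + 1\<close> assms by (intro powr_mono) auto
  also have "\<dots> = K * K powr (log 2 y)" using assms by (simp add: powr_add)
  also have "K powr (log 2 y) = y powr log 2 K"
    using assms by (simp add: powr_def log_def)
  finally show ?thesis using 1 by auto
qed

lemma iter_double: fixes F :: "real \<Rightarrow> real"
  assumes "\<And>x. x \<ge> x0 \<Longrightarrow> F x \<le> K * F (2*x)" "K \<ge> 0" "x0 > 0"
  shows "z \<ge> x0 \<Longrightarrow> F z \<le> K^k * F (2^k * z)"
proof (induction k)
  case 0 then show ?case by simp
next
  case (Suc k)
  have "2^k * z \<ge> x0" using Suc.prems \<open>x0 > 0\<close>
    by (smt (verit) mult_le_cancel_right1 one_le_power)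
  hence "F (2^k*z) \<le> K * F (2 * (2^k*z))" using assms(1) by blast
  hence "K^k * F (2^k*z) \<le> K^k * (K * F (2 * (2^k*z)))" using assms(2) by (simp add: mult_left_mono)
  with Suc show ?case by (simp add: mult.assoc mult.left_commute)
qed

lemma alg1: fixes m s A P :: real assumes "m > 0" shows "m * s * (A * P / m)^2 = A^2 * (s * P * P) / m"
proof -
  have "(A * P / m)^2 = (A^2 * P * P) / (m * m)" by (simp add: power2_eq_square)
  thus ?thesis using assms by (simp add: field_simps)
qed

lemma tail_part:
  fixes F :: "real \<Rightarrow> real" and b :: "nat \<Rightarrow> real" and mu theta C K x0 :: real
  assumes anti: "\<And>x y. x \<le> y \<Longrightarrow> F y \<le> F x" and F0: "\<And>x. F x \<ge> 0"
    and x0: "x0 > 0" and K: "K \<ge> 1" and dbl: "\<And>x. x \<ge> x0 \<Longrightarrow> F x \<le> K * F (2*x)"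
    and Fx0: "F x0 > 0" and mu: "mu > 1" and Cb: "\<And>n. mu^n * F (b n) \<le> C"
    and th: "theta > 0" and bpos: "\<And>n. b n > 0"
  shows "(\<lambda>n. mu^n * (real n)^2 * F (b n * theta / real n)^2) \<longlonglongrightarrow> 0"
proof -
  define \<beta> where "\<beta> = log 2 K"
  have C0: "C \<ge> 0" using Cb[of 0] F0[of "b 0"] by simp
  have it: "\<And>z k. z \<ge> x0 \<Longrightarrow> F z \<le> K^k * F (2^k * z)"
    using iter_double[of x0 F K, OF dbl] K x0 by auto
  have ev1: "eventually (\<lambda>n. real n \<ge> theta) sequentially"
    by real_asymp
  have lim1: "(\<lambda>n. real n powr \<beta> / mu^n) \<longlonglongrightarrow> 0" by (rule poly_exp[OF mu])
  hence "(\<lambda>n. (K * C / theta powr \<beta>) * (real n powr \<beta> / mu^n)) \<longlonglongrightarrow> (K * C / theta powr \<beta>) * 0"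
    by (intro tendsto_mult tendsto_const)
  hence "eventually (\<lambda>n. (K * C / theta powr \<beta>) * (real n powr \<beta> / mu^n) < F x0) sequentially"
    using Fx0 by (intro order_tendstoD) auto
  hence ev2: "eventually (\<lambda>n. b n * theta / real n \<ge> x0) sequentially"
    using ev1
  proof eventually_elim
    case (elim n)
    show ?case
    proof (rule ccontr)
      assume "\<not> b n * theta / real n \<ge> x0"
      hence lt: "b n * theta / real n < x0" by simp
      have ny: "real n / theta \<ge> 1" using elim th by simp
      obtain k where k: "real n / theta \<le> 2^k" "K^k \<le> K * (real n / theta) powr \<beta>"
        using choose_k[OF ny K] unfolding \<beta>_def by blast
      have npos: "real n > 0" using elim th by simp
      have "b n < real n * x0 / theta" using lt npos th by (simp add: field_simps)
      also have "\<dots> \<le> 2^k * x0" using k(1) x0 th by (simp add: field_simps)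
      finally have "F (2^k * x0) \<le> F (b n)" using anti by simp
      moreover have "F x0 \<le> K^k * F (2^k * x0)" using it[of x0 k] by simp
      ultimately have "F x0 \<le> K^k * F (b n)"
        by (smt (verit, best) K mult_left_mono one_le_power)
      hence "mu^n * F x0 \<le> K^k * (mu^n * F (b n))" using mu
        by (smt (verit) mult.left_commute mult_left_mono zero_le_power)
      also have "\<dots> \<le> K^k * C" using Cb K by (simp add: mult_left_mono)
      also have "\<dots> \<le> (K * (real n / theta) powr \<beta>) * C" using k(2) C0 by (simp add: mult_right_mono)
      finally have A: "mu^n * F x0 \<le> K * (real n / theta) powr \<beta> * C" .
      have "(real n / theta) powr \<beta> = real n powr \<beta> / theta powr \<beta>"
        using npos th by (simp add: powr_divide)
      hence "K * (real n / theta) powr \<beta> * C = mu^n * ((K * C / theta powr \<beta>) * (real n powr \<beta> / mu^n))"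
        using mu by (simp add: field_simps)
      with A have "mu^n * F x0 \<le> mu^n * ((K * C / theta powr \<beta>) * (real n powr \<beta> / mu^n))" by simp
      moreover have "0 < mu^n" using mu by simp
      ultimately have "F x0 \<le> (K * C / theta powr \<beta>) * (real n powr \<beta> / mu^n)"
        using mult_le_cancel_left_pos by blast
      with elim(1) show False by simp
    qed
  qed
  define D where "D = (K * C / theta powr \<beta>)^2"
  have lim2: "(\<lambda>n. D * (real n powr (2 + 2*\<beta>) / mu^n)) \<longlonglongrightarrow> D * 0"
    by (intro tendsto_mult tendsto_const poly_exp[OF mu])
  have lim3: "(\<lambda>n. D * (real n powr (2 + 2*\<beta>) / mu^n)) \<longlonglongrightarrow> 0" using lim2 by simp
  have lo: "eventually (\<lambda>n. 0 \<le> mu^n * (real n)^2 * F (b n * theta / real n)^2) sequentially"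
      using mu by (intro always_eventually allI) simp
    have hi: "eventually (\<lambda>n. mu^n * (real n)^2 * F (b n * theta / real n)^2 \<le> D * (real n powr (2 + 2*\<beta>) / mu^n)) sequentially"
      using ev1 ev2
    proof eventually_elim
      case (elim n)
      define t where "t = b n * theta / real n"
      have ny: "real n / theta \<ge> 1" using elim th by simp
      have npos: "real n > 0" using elim th by simp
      obtain k where k: "real n / theta \<le> 2^k" "K^k \<le> K * (real n / theta) powr \<beta>"
        using choose_k[OF ny K] unfolding \<beta>_def by blast
      have "b n = (real n / theta) * t" unfolding t_def using npos th by simp
      also have "\<dots> \<le> 2^k * t" using k(1) bpos[of n] th npos unfolding t_def
        by (intro mult_right_mono) auto
      finally have "F (2^k * t) \<le> F (b n)" using anti by simp
      moreover have "F t \<le> K^k * F (2^k * t)" proof -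
        have "x0 \<le> t" using elim(2) unfolding t_def by simp
        from it[OF this] show ?thesis .
      qed
      ultimately have "F t \<le> K^k * F (b n)"
        by (smt (verit, best) K mult_left_mono one_le_power)
      also have "\<dots> \<le> (K * (real n / theta) powr \<beta>) * F (b n)"
        using k(2) F0 by (simp add: mult_right_mono)
      finally have Ft: "F t \<le> K * (real n / theta) powr \<beta> * F (b n)" .
      have "mu^n * F (b n) \<le> C" by (rule Cb)
      hence Fb: "F (b n) \<le> C / mu^n" using mu by (simp add: pos_le_divide_eq mult.commute)
      have "F t \<le> K * (real n / theta) powr \<beta> * (C / mu^n)"
        using K by (intro order_trans[OF Ft mult_left_mono[OF Fb]]) auto
      also have "\<dots> = (K * C / theta powr \<beta>) * real n powr \<beta> / mu^n"
      proof -
        have "(real n / theta) powr \<beta> = real n powr \<beta> / theta powr \<beta>"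
          by (rule powr_divide)
        thus ?thesis by simp
      qed
      finally have Ft2: "F t \<le> (K * C / theta powr \<beta>) * real n powr \<beta> / mu^n" .
      have "F t ^ 2 \<le> ((K * C / theta powr \<beta>) * real n powr \<beta> / mu^n)^2"
        using Ft2 F0[of t] by (intro power_mono) auto
      hence "mu^n * (real n)^2 * F t ^2 \<le> mu^n * (real n)^2 * ((K * C / theta powr \<beta>) * real n powr \<beta> / mu^n)^2"
        using mu by (intro mult_left_mono) auto
      also have "\<dots> = D * (real n powr (2 + 2*\<beta>) / mu^n)"
      proof -
        define A where "A = K * C / theta powr \<beta>"
        define P where "P = real n powr \<beta>"
        have m: "mu^n > 0" using mu by simp
        have p: "real n powr (2 + 2*\<beta>) = (real n)^2 * P * P"
          proof -
          have "real n powr (2 + 2*\<beta>) = real n powr 2 * (real n powr \<beta> * real n powr \<beta>)"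
            by (simp only: powr_add mult_2)
          moreover have "real n powr 2 = (real n)^2" using npos by simp
          ultimately show ?thesis unfolding P_def by simp
        qed
        have "mu^n * (real n)^2 * (A * P / mu^n)^2 = A^2 * ((real n)^2 * P * P) / mu^n"
          using m by (rule alg1)
        thus ?thesis unfolding D_def p A_def[symmetric] P_def[symmetric] by (simp only: times_divide_eq_right)
      qed
      finally show ?case unfolding t_def .
    qed
  show ?thesis by (rule tendsto_sandwich[OF lo hi tendsto_const lim3])
qed



definition gtest :: "ereal \<Rightarrow> ereal" where
  "gtest x = max (min 1 (max (ereal (1/2)) x)) (min 1 (max (ereal (1/2)) (-x)))"
definition ftest :: "ereal \<Rightarrow> real" where
  "ftest x = 2 * real_of_ereal (gtest x) - 1"

lemma gtest_range: "ereal (1/2) \<le> gtest x \<and> gtest x \<le> 1"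
  unfolding gtest_def by (auto simp: max_def min_def)

lemma gtest_real: "\<exists>r. gtest x = ereal r \<and> 1/2 \<le> r \<and> r \<le> 1"
proof -
  have r: "ereal (1/2) \<le> gtest x" "gtest x \<le> 1" using gtest_range by auto
  thus ?thesis by (cases "gtest x") auto
qed

lemma ftest_cont: "cont_compact_supp_away0 ftest"
proof -
  have gc: "continuous_on UNIV gtest" unfolding gtest_def
    by (intro continuous_intros)
  have fin: "\<bar>gtest x\<bar> \<noteq> \<infinity>" for x
  proof -
    obtain r where "gtest x = ereal r" using gtest_real by blast
    thus ?thesis by simp
  qed
  have "continuous_on UNIV gtest = continuous_on UNIV (real_of_ereal \<circ> gtest)"
    by (rule continuous_on_iff_real) (use fin in auto)
  hence "continuous_on UNIV (real_of_ereal \<circ> gtest)" using gc by simp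
  hence c: "continuous_on UNIV ftest" unfolding ftest_def o_def
    by (intro continuous_intros) auto
  have z: "\<And>y::real. \<bar>y\<bar> < 1/2 \<Longrightarrow> ftest (ereal y) = 0"
  proof -
    fix y :: real assume "\<bar>y\<bar> < 1/2"
    hence "gtest (ereal y) = ereal (1/2)" unfolding gtest_def
      by (auto simp: max_def min_def)
    thus "ftest (ereal y) = 0" unfolding ftest_def by simp
  qed
  show ?thesis unfolding cont_compact_supp_away0_def using c z
    by (intro conjI exI[of _ "1/2"]) auto
qed

lemma ftest_ge: "\<bar>y\<bar> > 1 \<Longrightarrow> ftest (ereal y) = 1"
proof -
  assume "\<bar>y\<bar> > 1"
  hence "gtest (ereal y) = 1" unfolding gtest_def by (auto simp: max_def min_def)
  thus ?thesis unfolding ftest_def by simp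
qed

lemma ftest_nonneg: "ftest x \<ge> 0" and ftest_le1: "ftest x \<le> 1"
proof -
  obtain r where "gtest x = ereal r" "1/2 \<le> r" "r \<le> 1"
    using gtest_real by blast
  thus "ftest x \<ge> 0" "ftest x \<le> 1" unfolding ftest_def by auto
qed

lemma vague_bound:
  fixes M :: "'w measure" and X0 :: "'w \<Rightarrow> real"
  assumes P: "prob_space M" and Xm: "X0 \<in> borel_measurable M"
    and bv: "vague_conv_nu_alpha M X0 mu b \<alpha> p q" and bpos: "\<And>n. b n > 0" and mu: "mu > 1"
  shows "\<exists>C. \<forall>n. mu^n * measure M {w \<in> space M. \<bar>X0 w\<bar> > b n} \<le> C"
proof -
  interpret prob_space M by (rule P)
  define a where "a n = mu ^ n * (\<integral>w. ftest (ereal (X0 w / b n)) \<partial>M)" for n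
  have "convergent a" unfolding a_def using bv ftest_cont unfolding vague_conv_nu_alpha_def convergent_def
    by blast
  hence "Bseq a" by (rule convergent_imp_Bseq)
  then obtain C where C: "\<And>n. norm (a n) \<le> C" by (metis BseqE real_norm_def)
  have fm: "ftest \<in> borel_measurable borel"
    using ftest_cont unfolding cont_compact_supp_away0_def by (intro borel_measurable_continuous_onI) auto
  have meas: "(\<lambda>w. ftest (ereal (X0 w / b n))) \<in> borel_measurable M" for n
    using fm Xm by measurable
  have int: "integrable M (\<lambda>w. ftest (ereal (X0 w / b n)))" for n
    by (rule integrable_const_bound[where B=1]) (use meas ftest_nonneg ftest_le1 in auto)
  have "mu^n * measure M {w \<in> space M. \<bar>X0 w\<bar> > b n} \<le> C" for n
  proof -
    have set: "{w \<in> space M. \<bar>X0 w\<bar> > b n} \<in> sets M" using Xm by measurable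
    have "measure M {w \<in> space M. \<bar>X0 w\<bar> > b n} = (\<integral>w. indicator {w \<in> space M. \<bar>X0 w\<bar> > b n} w \<partial>M)"
      using set by simp
    also have "\<dots> \<le> (\<integral>w. ftest (ereal (X0 w / b n)) \<partial>M)"
    proof (rule integral_mono[OF _ int])
      show "integrable M (indicator {w \<in> space M. \<bar>X0 w\<bar> > b n} :: 'w \<Rightarrow> real)"
        using set by (intro integrable_real_indicator) (auto simp: less_top[symmetric])
      fix w assume "w \<in> space M"
      show "indicator {w \<in> space M. \<bar>X0 w\<bar> > b n} w \<le> ftest (ereal (X0 w / b n))"
      proof (cases "\<bar>X0 w\<bar> > b n")
        case True
        hence "\<bar>X0 w / b n\<bar> > 1" using bpos[of n] by (simp add: abs_divide)
        thus ?thesis using True \<open>w \<in> space M\<close> ftest_ge by simp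
      next
        case False thus ?thesis using ftest_nonneg by simp
      qed
    qed
    finally have "mu^n * measure M {w \<in> space M. \<bar>X0 w\<bar> > b n} \<le> a n"
      unfolding a_def using mu by (intro mult_left_mono) auto
    also have "\<dots> \<le> C" using C[of n] by simp
    finally show ?thesis .
  qed
  thus ?thesis by blast
qed

lemma doubling:
  fixes F L :: "real \<Rightarrow> real" and \<alpha> :: real
  assumes sv: "slowly_varying L" and tl: "\<And>x. x > 0 \<Longrightarrow> F x = x powr (-\<alpha>) * L x"
  shows "\<exists>x0>0. F x0 > 0 \<and> (\<forall>x\<ge>x0. F x \<le> (2 powr \<alpha> + 1) * F (2*x))"
proof -
  define K where "K = 2 powr \<alpha> + 1"
  have L1: "((\<lambda>x. L (2*x) / L x) \<longlongrightarrow> 1) at_top" using sv unfolding slowly_varying_def by simp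
  have "((\<lambda>x. inverse (L (2*x) / L x)) \<longlongrightarrow> inverse 1) at_top"
    by (rule tendsto_inverse[OF L1]) simp
  hence L2: "((\<lambda>x. L x / L (2*x)) \<longlongrightarrow> 1) at_top" by (simp add: inverse_divide)
  have "((\<lambda>x. 2 powr \<alpha> * (L x / L (2*x))) \<longlongrightarrow> 2 powr \<alpha> * 1) at_top"
    by (intro tendsto_mult tendsto_const L2)
  hence e1: "eventually (\<lambda>x. 2 powr \<alpha> * (L x / L (2*x)) < K) at_top"
    unfolding K_def by (intro order_tendstoD(2)) auto
  have e2: "eventually (\<lambda>x. L x > 0) at_top" using sv unfolding slowly_varying_def by simp
  from eventually_conj[OF e1 e2] obtain N where N: "\<And>x. x \<ge> N \<Longrightarrow> 2 powr \<alpha> * (L x / L (2*x)) < K \<and> L x > 0"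
    unfolding eventually_at_top_linorder by blast
  define x0 where "x0 = max N 1"
  have x0: "x0 > 0" unfolding x0_def by simp
  have main: "F x \<le> K * F (2*x) \<and> F x > 0" if "x \<ge> x0" for x
  proof -
    have xp: "x > 0" "x \<ge> N" "2*x \<ge> N" using that unfolding x0_def by auto
    have Lx: "L x > 0" and r: "2 powr \<alpha> * (L x / L (2*x)) < K" using N[OF xp(2)] by auto
    have L2x: "L (2*x) > 0" using N[OF xp(3)] by auto
    have Fx: "F x = x powr (-\<alpha>) * L x" using tl xp by simp
    have F2x: "F (2*x) = 2 powr (-\<alpha>) * x powr (-\<alpha>) * L (2*x)" using tl[of "2*x"] xp
      by (simp add: powr_mult)
    have "F x = (2 powr \<alpha> * (L x / L (2*x))) * (2 powr (-\<alpha>) * x powr (-\<alpha>) * L (2*x))"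
      unfolding Fx using L2x by (simp add: powr_minus field_simps)
    also have "\<dots> \<le> K * (2 powr (-\<alpha>) * x powr (-\<alpha>) * L (2*x))"
      using r L2x by (intro mult_right_mono) auto
    finally have "F x \<le> K * F (2*x)" unfolding F2x .
    moreover have "F x > 0" using Fx Lx xp by simp
    ultimately show ?thesis by simp
  qed
  show ?thesis unfolding K_def[symmetric] using main x0 by (intro exI[of _ x0]) auto
qed



lemma list_prod_sum:
  fixes h :: "nat \<Rightarrow> ennreal"
  shows "(\<integral>\<^sup>+v. (\<Prod>m<length v. h (v!m)) \<partial>count_space {v. length v = n}) = (\<integral>\<^sup>+i. h i \<partial>count_space UNIV)^n"
proof (induction n)
  case 0
  have "{v::nat list. length v = 0} = {[]}" by auto
  thus ?case by (simp add: nn_integral_count_space_finite)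
next
  case (Suc n)
  define V where "V = {v::nat list. length v = n}"
  define G where "G v = (\<Prod>m<length v. h (v!m))" for v
  have cV: "countable V" by simp
  have img: "(\<lambda>p. fst p # snd p) ` (UNIV \<times> V) = {v. length v = Suc n}"
  proof (intro equalityI subsetI)
    fix v assume "v \<in> {v::nat list. length v = Suc n}"
    then obtain i u where "v = i # u" "length u = n" by (cases v) auto
    thus "v \<in> (\<lambda>p. fst p # snd p) ` (UNIV \<times> V)"
      unfolding V_def by (intro image_eqI[of _ _ "(i,u)"]) auto
  qed (auto simp: V_def)
  have inj: "inj_on (\<lambda>p. fst p # snd p) (UNIV \<times> V)"
    unfolding inj_on_def by auto
  have bij: "bij_betw (\<lambda>p. fst p # snd p) (UNIV \<times> V) {v. length v = Suc n}"
    unfolding bij_betw_def using img inj by simp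
  have "(\<integral>\<^sup>+v. G v \<partial>count_space {v. length v = Suc n}) = (\<integral>\<^sup>+p. G (fst p # snd p) \<partial>count_space (UNIV \<times> V))"
    by (rule nn_integral_bij_count_space[OF bij, symmetric])
  also have "\<dots> = (\<integral>\<^sup>+p. G (fst p # snd p) \<partial>(count_space UNIV \<Otimes>\<^sub>M count_space V))"
    by (subst pair_measure_countable) (use cV in auto)
  also have "\<dots> = (\<integral>\<^sup>+i. \<integral>\<^sup>+v. G (i # v) \<partial>count_space V \<partial>count_space UNIV)"
  proof -
    interpret sigma_finite_measure "count_space V"
      by (rule sigma_finite_measure_count_space_countable[OF cV])
    show ?thesis
      by (subst nn_integral_fst[symmetric]) (auto simp: pair_measure_countable cV)
  qed
  also have "\<dots> = (\<integral>\<^sup>+i. h i * (\<integral>\<^sup>+v. G v \<partial>count_space V) \<partial>count_space UNIV)"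
  proof (rule nn_integral_cong)
    fix i
    have "\<And>v. G (i # v) = h i * G v" unfolding G_def
      by (simp only: length_Cons prod.lessThan_Suc_shift nth_Cons_0 nth_Cons_Suc)
    thus "(\<integral>\<^sup>+v. G (i # v) \<partial>count_space V) = h i * (\<integral>\<^sup>+v. G v \<partial>count_space V)"
      by (simp add: nn_integral_cmult)
  qed
  also have "\<dots> = (\<integral>\<^sup>+i. h i \<partial>count_space UNIV) * (\<integral>\<^sup>+v. G v \<partial>count_space V)"
    by (simp add: nn_integral_multc)
  finally show ?case using Suc unfolding G_def V_def by (simp add: mult.commute)
qed



lemma emeasure_UN_le_count:
  assumes cV: "countable V" and U: "\<And>v. v \<in> V \<Longrightarrow> U v \<in> sets M"
  shows "emeasure M (\<Union>v\<in>V. U v) \<le> (\<integral>\<^sup>+v. emeasure M (U v) \<partial>count_space V)"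
proof -
  have UN: "(\<Union>v\<in>V. U v) \<in> sets M" using cV U by (intro sets.countable_UN'') auto
  have "emeasure M (\<Union>v\<in>V. U v) = (\<integral>\<^sup>+w. indicator (\<Union>v\<in>V. U v) w \<partial>M)"
    using UN by simp
  also have "\<dots> \<le> (\<integral>\<^sup>+w. (\<integral>\<^sup>+v. indicator (U v) w \<partial>count_space V) \<partial>M)"
  proof (rule nn_integral_mono)
    fix w
    show "indicator (\<Union>v\<in>V. U v) w \<le> (\<integral>\<^sup>+v. indicator (U v) w \<partial>count_space V)"
    proof (cases "w \<in> (\<Union>v\<in>V. U v)")
      case True
      then obtain v0 where v0: "v0 \<in> V" "w \<in> U v0" by auto
      have "(1::ennreal) = emeasure (count_space V) {v0}" using v0 by simp
      also have "\<dots> = (\<integral>\<^sup>+v. indicator {v0} v \<partial>count_space V)"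
        using v0 by (subst nn_integral_indicator) auto
      also have "\<dots> \<le> (\<integral>\<^sup>+v. indicator (U v) w \<partial>count_space V)"
        by (rule nn_integral_mono) (use v0 in \<open>auto split: split_indicator\<close>)
      finally show ?thesis using True by simp
    qed simp
  qed
  also have "\<dots> = (\<integral>\<^sup>+v. (\<integral>\<^sup>+w. indicator (U v) w \<partial>M) \<partial>count_space V)"
    by (rule nn_integral_count_space_nn_integral[OF cV]) (use U in auto)
  also have "\<dots> = (\<integral>\<^sup>+v. emeasure M (U v) \<partial>count_space V)"
    by (rule nn_integral_cong) (use U in \<open>auto simp: space_count_space\<close>)
  finally show ?thesis .
qed



lemma indep_prod:
  assumes P: "prob_space M" and ind: "prob_space.indep_vars M (\<lambda>_. borel) Y UNIV"
    and J: "finite J" "J \<noteq> {}" and S: "\<And>i. S i \<in> sets borel"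
  shows "measure M (\<Inter>i\<in>J. Y i -` S i \<inter> space M) = (\<Prod>i\<in>J. measure M (Y i -` S i \<inter> space M))"
proof -
  interpret prob_space M by (rule P)
  have "indep_sets (\<lambda>i. { Y i -` A \<inter> space M | A. A \<in> sets borel}) UNIV"
    using ind unfolding indep_vars_def2 by simp
  thus ?thesis by (rule indep_setsD) (use J S in auto)
qed

lemma dist_eq_N:
  assumes "\<And>u. N u \<in> measurable M (count_space UNIV)"
    and "\<And>u. distr M (count_space UNIV) (N u) = distr M (count_space UNIV) (N [])"
  shows "measure M (N u -` B \<inter> space M) = measure M (N [] -` B \<inter> space M)"
proof -
  have "measure M (N u -` B \<inter> space M) = measure (distr M (count_space UNIV) (N u)) B"
    by (rule measure_distr[symmetric]) (use assms in auto)
  also have "\<dots> = measure (distr M (count_space UNIV) (N [])) B" by (subst assms(2)[of u]) (rule refl)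
  also have "\<dots> = measure M (N [] -` B \<inter> space M)"
    by (rule measure_distr) (use assms in auto)
  finally show ?thesis .
qed

lemma dist_eq_X:
  assumes "\<And>u. X u \<in> borel_measurable M"
    and "\<And>u. distr M borel (X u) = distr M borel (X [])" and "B \<in> sets borel"
  shows "measure M (X u -` B \<inter> space M) = measure M (X [] -` B \<inter> space M)"
proof -
  have "measure M (X u -` B \<inter> space M) = measure (distr M borel (X u)) B"
    by (rule measure_distr[symmetric]) (use assms in auto)
  also have "\<dots> = measure (distr M borel (X [])) B" by (subst assms(2)[of u]) (rule refl)
  also have "\<dots> = measure M (X [] -` B \<inter> space M)"
    by (rule measure_distr) (use assms in auto)
  finally show ?thesis .
qed

lemma event_prob:
  fixes M :: "'w measure" and N :: "nat list \<Rightarrow> 'w \<Rightarrow> nat" and X :: "nat list \<Rightarrow> 'w \<Rightarrow> real"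
  assumes P: "prob_space M"
    and N_meas: "\<And>u. N u \<in> measurable M (count_space UNIV)"
    and X_meas: "\<And>u. X u \<in> borel_measurable M"
    and indep: "prob_space.indep_vars M (\<lambda>_. borel)
          (\<lambda>i w. case i of Inl u \<Rightarrow> real (N u w) | Inr u \<Rightarrow> X u w) UNIV"
    and N_ident: "\<And>u. distr M (count_space UNIV) (N u) = distr M (count_space UNIV) (N [])"
    and X_ident: "\<And>u. distr M borel (X u) = distr M borel (X [])"
    and v: "length v = n" and kj: "k < j" "j < n"
  shows "measure M {w \<in> space M. gw_vertex N w v \<and> t < \<bar>X (take (Suc k) v) w\<bar> \<and> t < \<bar>X (take (Suc j) v) w\<bar>}
    = (\<Prod>m<n. measure M {w \<in> space M. v!m < N [] w}) * (measure M {w \<in> space M. t < \<bar>X [] w\<bar>})^2"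
proof -
  define Y where "Y = (\<lambda>i w. case i of Inl u \<Rightarrow> real (N u w) | Inr u \<Rightarrow> X u w)"
  define S where "S = (\<lambda>i::nat list + nat list. case i of Inl u \<Rightarrow> {x::real. real (v ! length u) < x} | Inr u \<Rightarrow> {x. t < \<bar>x\<bar>})"
  define a where "a = take (Suc k) v"
  define c where "c = take (Suc j) v"
  define J1 where "J1 = (\<lambda>m. Inl (take m v) :: nat list + nat list) ` {..<n}"
  define J where "J = J1 \<union> {Inr a, Inr c}"
  have la: "length a = Suc k" "length c = Suc j" using v kj unfolding a_def c_def by simp_all
  hence ac: "a \<noteq> c" using kj by auto
  have Sb: "S i \<in> sets borel" for i unfolding S_def by (cases i) auto
  have fin: "finite J" "J \<noteq> {}" unfolding J_def J1_def by auto
  have set_eq: "{w \<in> space M. gw_vertex N w v \<and> t < \<bar>X a w\<bar> \<and> t < \<bar>X c w\<bar>} = (\<Inter>i\<in>J. Y i -` S i \<inter> space M)"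
  proof -
    have len: "\<And>m. m < n \<Longrightarrow> length (take m v) = m" using v by simp
    show ?thesis
    proof (intro equalityI subsetI)
      fix w assume w: "w \<in> {w \<in> space M. gw_vertex N w v \<and> t < \<bar>X a w\<bar> \<and> t < \<bar>X c w\<bar>}"
      show "w \<in> (\<Inter>i\<in>J. Y i -` S i \<inter> space M)"
      proof (rule INT_I)
        fix i assume "i \<in> J"
        then consider m where "m < n" "i = Inl (take m v)" | "i = Inr a" | "i = Inr c"
          unfolding J_def J1_def by auto
        thus "w \<in> Y i -` S i \<inter> space M"
        proof cases
          case (1 m)
          have "v!m < N (take m v) w" using w 1 v unfolding gw_vertex_def by auto
          thus ?thesis using 1 w len[of m] unfolding Y_def S_def by auto
        qed (use w in \<open>auto simp: Y_def S_def\<close>)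
      qed
    next
      fix w assume w: "w \<in> (\<Inter>i\<in>J. Y i -` S i \<inter> space M)"
      have ws: "w \<in> space M" using w fin(2) by auto
      have "gw_vertex N w v" unfolding gw_vertex_def
      proof (intro allI impI)
        fix m assume m: "m < length v"
        hence "Inl (take m v) \<in> J" unfolding J_def J1_def using v by auto
        hence "w \<in> Y (Inl (take m v)) -` S (Inl (take m v))" using w by blast
        thus "v!m < N (take m v) w" using len[of m] m v unfolding Y_def S_def by auto
      qed
      moreover have "Inr a \<in> J" "Inr c \<in> J" unfolding J_def by auto
      hence "w \<in> Y (Inr a) -` S (Inr a)" "w \<in> Y (Inr c) -` S (Inr c)" using w by blast+
      hence "t < \<bar>X a w\<bar>" "t < \<bar>X c w\<bar>" unfolding Y_def S_def by auto
      ultimately show "w \<in> {w \<in> space M. gw_vertex N w v \<and> t < \<bar>X a w\<bar> \<and> t < \<bar>X c w\<bar>}"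
        using ws by simp
    qed
  qed
  have inj: "inj_on (\<lambda>m. Inl (take m v) :: nat list + nat list) {..<n}"
  proof (rule inj_onI)
    fix m m' assume "m \<in> {..<n}" "m' \<in> {..<n}" "(Inl (take m v) :: nat list + nat list) = Inl (take m' v)"
    hence "length (take m v) = length (take m' v)" "m < n" "m' < n" by auto
    thus "m = m'" using v by simp
  qed
  have disj: "J1 \<inter> {Inr a, Inr c} = {}" unfolding J1_def by auto
  have "measure M {w \<in> space M. gw_vertex N w v \<and> t < \<bar>X a w\<bar> \<and> t < \<bar>X c w\<bar>}
      = (\<Prod>i\<in>J. measure M (Y i -` S i \<inter> space M))"
    unfolding set_eq by (rule indep_prod[OF P indep[folded Y_def] fin Sb])
  also have "\<dots> = (\<Prod>i\<in>J1. measure M (Y i -` S i \<inter> space M)) * (\<Prod>i\<in>{Inr a, Inr c}. measure M (Y i -` S i \<inter> space M))"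
    unfolding J_def by (rule prod.union_disjoint) (use disj in \<open>auto simp: J1_def\<close>)
  also have "(\<Prod>i\<in>J1. measure M (Y i -` S i \<inter> space M)) = (\<Prod>m<n. measure M {w \<in> space M. v!m < N [] w})"
    unfolding J1_def
  proof (subst prod.reindex[OF inj], rule prod.cong[OF refl])
    fix m assume m: "m \<in> {..<n}"
    have "Y (Inl (take m v)) -` S (Inl (take m v)) \<inter> space M = N (take m v) -` {v!m<..} \<inter> space M"
      unfolding Y_def S_def using m v by auto
    also have "measure M \<dots> = measure M (N [] -` {v!m<..} \<inter> space M)"
      by (rule dist_eq_N[of N M, OF N_meas N_ident])
    also have "N [] -` {v!m<..} \<inter> space M = {w \<in> space M. v!m < N [] w}" by auto
    finally show "((\<lambda>i. measure M (Y i -` S i \<inter> space M)) \<circ> (\<lambda>m. Inl (take m v))) m = measure M {w \<in> space M. v!m < N [] w}"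
      by simp
  qed
  also have "(\<Prod>i\<in>{Inr a, Inr c}. measure M (Y i -` S i \<inter> space M)) = (measure M {w \<in> space M. t < \<bar>X [] w\<bar>})^2"
  proof -
    have e: "measure M (Y (Inr u) -` S (Inr u) \<inter> space M) = measure M {w \<in> space M. t < \<bar>X [] w\<bar>}" for u
    proof -
      have "Y (Inr u) -` S (Inr u) \<inter> space M = X u -` {x. t < \<bar>x\<bar>} \<inter> space M"
        unfolding Y_def S_def by auto
      also have "measure M \<dots> = measure M (X [] -` {x. t < \<bar>x\<bar>} \<inter> space M)"
        by (rule dist_eq_X[of X M, OF X_meas X_ident]) measurable
      also have "X [] -` {x. t < \<bar>x\<bar>} \<inter> space M = {w \<in> space M. t < \<bar>X [] w\<bar>}" by auto
      finally show ?thesis .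
    qed
    show ?thesis using ac by (simp add: e power2_eq_square)
  qed
  finally show ?thesis unfolding a_def c_def .
qed



lemma mean_sum:
  fixes M :: "'w measure" and N0 :: "'w \<Rightarrow> nat"
  assumes P: "prob_space M" and Nm: "N0 \<in> measurable M (count_space UNIV)"
    and int: "integrable M (\<lambda>w. real (N0 w))"
  shows "(\<integral>\<^sup>+i. ennreal (measure M {w\<in>space M. i < N0 w}) \<partial>count_space UNIV) = ennreal (\<integral>w. real (N0 w) \<partial>M)"
proof -
  interpret prob_space M by (rule P)
  have ms: "{w\<in>space M. i < N0 w} \<in> sets M" for i using Nm by measurable
  have "(\<integral>\<^sup>+i. ennreal (measure M {w\<in>space M. i < N0 w}) \<partial>count_space UNIV)
      = (\<integral>\<^sup>+i. (\<integral>\<^sup>+w. indicator {w\<in>space M. i < N0 w} w \<partial>M) \<partial>count_space UNIV)"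
    by (rule nn_integral_cong) (simp add: ms emeasure_eq_measure)
  also have "\<dots> = (\<integral>\<^sup>+w. (\<integral>\<^sup>+i. indicator {w\<in>space M. i < N0 w} w \<partial>count_space UNIV) \<partial>M)"
    by (rule nn_integral_count_space_nn_integral[symmetric]) (use ms in auto)
  also have "\<dots> = (\<integral>\<^sup>+w. ennreal (real (N0 w)) \<partial>M)"
  proof (rule nn_integral_cong)
    fix w assume w: "w \<in> space M"
    have "(\<integral>\<^sup>+i. indicator {w\<in>space M. i < N0 w} w \<partial>count_space UNIV) = (\<integral>\<^sup>+i. indicator {..<N0 w} i \<partial>count_space UNIV)"
      by (rule nn_integral_cong) (use w in \<open>auto split: split_indicator\<close>)
    also have "\<dots> = emeasure (count_space UNIV) {..<N0 w}" by (rule nn_integral_indicator) simp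
    also have "\<dots> = ennreal (real (N0 w))" by (simp add: emeasure_count_space_finite ennreal_of_nat_eq_real_of_nat)
    finally show "(\<integral>\<^sup>+i. indicator {w\<in>space M. i < N0 w} w \<partial>count_space UNIV) = ennreal (real (N0 w))" .
  qed
  also have "\<dots> = ennreal (\<integral>w. real (N0 w) \<partial>M)"
    by (rule nn_integral_eq_integral[OF int]) simp
  finally show ?thesis .
qed


theorem mainTheorem9:
  fixes M :: "'w measure"
    and N :: "nat list \<Rightarrow> 'w \<Rightarrow> nat"
    and X :: "nat list \<Rightarrow> 'w \<Rightarrow> real"
    and \<mu> \<alpha> p q \<theta> :: real and b :: "nat \<Rightarrow> real"
  assumes "prob_space M"
    and N_meas: "\<And>u. N u \<in> measurable M (count_space UNIV)"
    and X_meas: "\<And>u. X u \<in> borel_measurable M"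
    and indep: "prob_space.indep_vars M (\<lambda>_. borel)
          (\<lambda>i w. case i of Inl u \<Rightarrow> real (N u w) | Inr u \<Rightarrow> X u w) UNIV"
    and N_ident: "\<And>u. distr M (count_space UNIV) (N u) = distr M (count_space UNIV) (N [])"
    and X_ident: "\<And>u. distr M borel (X u) = distr M borel (X [])"
    and mu_int: "integrable M (\<lambda>w. real (N [] w))"
    and mu_def: "\<mu> = (\<integral>w. real (N [] w) \<partial>M)"
    and mu_gt1: "\<mu> > 1"
    and LlogL: "integrable M (\<lambda>w. real (N [] w) * max 0 (ln (real (N [] w))))"
    and alpha_pos: "\<alpha> > 0"
    and tail: "\<exists>L. slowly_varying L \<and>
          (\<forall>x>0. measure M {w \<in> space M. \<bar>X [] w\<bar> > x} = x powr (-\<alpha>) * L x)"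
    and pq: "p \<ge> 0" "q \<ge> 0" "p + q = 1"
    and tail_p: "((\<lambda>x. measure M {w \<in> space M. X [] w > x}
                     / measure M {w \<in> space M. \<bar>X [] w\<bar> > x}) \<longlongrightarrow> p) at_top"
    and tail_q: "((\<lambda>x. measure M {w \<in> space M. X [] w < - x}
                     / measure M {w \<in> space M. \<bar>X [] w\<bar> > x}) \<longlongrightarrow> q) at_top"
    and b_pos: "\<And>n. b n > 0"
    and b_vague: "vague_conv_nu_alpha M (X []) \<mu> b \<alpha> p q"
    and theta_pos: "\<theta> > 0"
  shows "(\<lambda>n. measure M ((space M - A_event N X b \<theta> n) \<inter> gw_survival N)
              / measure M (space M \<inter> gw_survival N)) \<longlonglongrightarrow> 0"
  proof -
  interpret prob_space M by fact
  define F where "F t = measure M {w \<in> space M. t < \<bar>X [] w\<bar>}" for t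
  define G where "G i = measure M {w \<in> space M. i < N [] w}" for i
  define tt where "tt n = b n * \<theta> / real n" for n
  define V where "V n = {v::nat list. length v = n}" for n
  define Pr where "Pr n = {p::nat \<times> nat. fst p < snd p \<and> snd p < n}" for n
  define E where "E v p t = {w \<in> space M. gw_vertex N w v \<and> t < \<bar>X (take (Suc (fst p)) v) w\<bar> \<and> t < \<bar>X (take (Suc (snd p)) v) w\<bar>}" for v p t
  define B where "B n = (\<Union>v\<in>V n. \<Union>p\<in>Pr n. E v p (tt n))" for n
  have G0: "G i \<ge> 0" for i unfolding G_def by simp
  have F0: "F x \<ge> 0" for x unfolding F_def by simp
  have Nm0: "N [] \<in> measurable M (count_space UNIV)" by (rule N_meas)
  have sumG: "(\<integral>\<^sup>+i. ennreal (G i) \<partial>count_space UNIV) = ennreal \<mu>"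
    unfolding G_def mu_def by (rule mean_sum[OF \<open>prob_space M\<close> Nm0 mu_int])
  have sumV: "(\<integral>\<^sup>+v. ennreal (\<Prod>m<length v. G (v!m)) \<partial>count_space (V n)) = ennreal (\<mu>^n)" for n
  proof -
    have "(\<integral>\<^sup>+v. ennreal (\<Prod>m<length v. G (v!m)) \<partial>count_space (V n))
        = (\<integral>\<^sup>+v. (\<Prod>m<length v. ennreal (G (v!m))) \<partial>count_space (V n))"
      by (rule nn_integral_cong) (simp add: prod_ennreal G0)
    also have "\<dots> = (\<integral>\<^sup>+i. ennreal (G i) \<partial>count_space UNIV)^n"
      unfolding V_def by (rule list_prod_sum)
    also have "\<dots> = ennreal (\<mu>^n)" unfolding sumG using mu_gt1 by (simp add: ennreal_power)
    finally show ?thesis .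
  qed
  have Emeas: "E v p t \<in> sets M" for v p t
    unfolding E_def gw_vertex_def using N_meas X_meas by measurable
  have Eprob: "measure M (E v p t) = (\<Prod>m<length v. G (v!m)) * (F t)^2" if "v \<in> V n" "p \<in> Pr n" for v p t n
    using event_prob[OF \<open>prob_space M\<close> N_meas X_meas indep N_ident X_ident, of v n "fst p" "snd p" t] that
    unfolding E_def G_def F_def V_def Pr_def by simp
  have cardP: "real (card (Pr n)) \<le> (real n)^2" for n
  proof -
    have "Pr n \<subseteq> {..<n} \<times> {..<n}" unfolding Pr_def by auto
    hence "card (Pr n) \<le> card ({..<n} \<times> {..<n})" by (intro card_mono) auto
    hence "card (Pr n) \<le> n * n" by (simp add: card_cartesian_product)
    thus ?thesis by (simp add: power2_eq_square flip: of_nat_mult)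
  qed
  have finP: "finite (Pr n)" for n
  proof -
    have "Pr n \<subseteq> {..<n} \<times> {..<n}" unfolding Pr_def by auto
    thus ?thesis by (rule finite_subset) auto
  qed
  have Bbound: "measure M (B n) \<le> \<mu>^n * (real n)^2 * F (tt n)^2" for n
  proof -
    have "emeasure M (B n) \<le> (\<integral>\<^sup>+v. emeasure M (\<Union>p\<in>Pr n. E v p (tt n)) \<partial>count_space (V n))"
      unfolding B_def by (rule emeasure_UN_le_count) (use Emeas finP in \<open>auto simp: V_def\<close>)
    also have "\<dots> \<le> (\<integral>\<^sup>+v. ennreal (real (card (Pr n)) * F (tt n)^2) * ennreal (\<Prod>m<length v. G (v!m)) \<partial>count_space (V n))"
    proof (rule nn_integral_mono)
      fix v assume "v \<in> space (count_space (V n))"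
      hence v: "v \<in> V n" by simp
      have "emeasure M (\<Union>p\<in>Pr n. E v p (tt n)) \<le> (\<Sum>p\<in>Pr n. emeasure M (E v p (tt n)))"
        by (rule emeasure_subadditive_finite) (use finP Emeas in auto)
      also have "\<dots> = (\<Sum>p\<in>Pr n. ennreal ((\<Prod>m<length v. G (v!m)) * (F (tt n))^2))"
        by (rule sum.cong[OF refl]) (simp add: emeasure_eq_measure Eprob[OF v])
      also have "\<dots> = ennreal (real (card (Pr n)) * F (tt n)^2) * ennreal (\<Prod>m<length v. G (v!m))"
        using G0 F0 by (simp add: ennreal_mult' prod_nonneg ennreal_of_nat_eq_real_of_nat mult.assoc mult.commute mult.left_commute)
      finally show "emeasure M (\<Union>p\<in>Pr n. E v p (tt n)) \<le> ennreal (real (card (Pr n)) * F (tt n)^2) * ennreal (\<Prod>m<length v. G (v!m))" .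
    qed
    also have "\<dots> = ennreal (real (card (Pr n)) * F (tt n)^2) * ennreal (\<mu>^n)"
      by (subst nn_integral_cmult) (simp_all add: sumV)
    also have "\<dots> = ennreal (real (card (Pr n)) * F (tt n)^2 * \<mu>^n)"
      using mu_gt1 by (simp add: ennreal_mult')
    also have "\<dots> \<le> ennreal (\<mu>^n * (real n)^2 * F (tt n)^2)"
    proof (rule ennreal_leI)
      have "real (card (Pr n)) * (F (tt n)^2 * \<mu>^n) \<le> (real n)^2 * (F (tt n)^2 * \<mu>^n)"
        using cardP[of n] mu_gt1 by (intro mult_right_mono) auto
      thus "real (card (Pr n)) * F (tt n)^2 * \<mu>^n \<le> \<mu>^n * (real n)^2 * F (tt n)^2"
        by (simp add: mult_ac)
    qed
    finally have "emeasure M (B n) \<le> ennreal (\<mu>^n * (real n)^2 * F (tt n)^2)" .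
    thus ?thesis using mu_gt1 by (simp add: emeasure_eq_measure ennreal_le_iff)
  qed
  have sub: "(space M - A_event N X b \<theta> n) \<inter> gw_survival N \<subseteq> B n" for n
  proof
    fix w assume "w \<in> (space M - A_event N X b \<theta> n) \<inter> gw_survival N"
    hence ws: "w \<in> space M" and nA: "w \<notin> A_event N X b \<theta> n" by auto
    from nA obtain v where v: "length v = n" "gw_vertex N w v"
      and c: "\<not> card {k. k < n \<and> \<bar>X (take (Suc k) v) w\<bar> > b n * \<theta> / real n} \<le> 1"
      unfolding A_event_def by auto
    define K where "K = {k. k < n \<and> \<bar>X (take (Suc k) v) w\<bar> > b n * \<theta> / real n}"
    have "\<exists>k j. k \<in> K \<and> j \<in> K \<and> k < j"
    proof (rule ccontr)
      assume no: "\<not> (\<exists>k j. k \<in> K \<and> j \<in> K \<and> k < j)"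
      have "card K \<le> 1"
      proof (cases "K = {}")
        case False
        then obtain k0 where k0: "k0 \<in> K" by auto
        have "K \<subseteq> {k0}"
        proof
          fix j assume j: "j \<in> K"
          show "j \<in> {k0}"
          proof (cases j k0 rule: linorder_cases)
            case less thus ?thesis using no j k0 by blast
          next
            case greater thus ?thesis using no j k0 by blast
          qed simp
        qed
        hence "card K \<le> card {k0}" by (intro card_mono) auto
        thus ?thesis by simp
      qed simp
      thus False using c unfolding K_def by simp
    qed
    then obtain k j where kj: "k \<in> K" "j \<in> K" "k < j" by blast
    have "w \<in> E v (k, j) (tt n)" using kj ws v unfolding E_def K_def tt_def by auto
    moreover have "v \<in> V n" "(k, j) \<in> Pr n" using v kj unfolding V_def Pr_def K_def by auto
    ultimately show "w \<in> B n" unfolding B_def by blast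
  qed
  have num: "measure M ((space M - A_event N X b \<theta> n) \<inter> gw_survival N) \<le> \<mu>^n * (real n)^2 * F (tt n)^2" for n
  proof (cases "(space M - A_event N X b \<theta> n) \<inter> gw_survival N \<in> sets M")
    case True
    have "B n \<in> sets M" unfolding B_def V_def
      by (intro sets.countable_UN'' sets.finite_UN) (use Emeas finP in auto)
    hence "measure M ((space M - A_event N X b \<theta> n) \<inter> gw_survival N) \<le> measure M (B n)"
      using True sub by (intro finite_measure_mono) auto
    thus ?thesis using Bbound[of n] by linarith
  next
    case False
    hence "measure M ((space M - A_event N X b \<theta> n) \<inter> gw_survival N) = 0" by (rule measure_notin_sets)
    thus ?thesis using mu_gt1 by simp
  qed
  obtain L where sv: "slowly_varying L" and tlL: "\<forall>x>0. measure M {w \<in> space M. \<bar>X [] w\<bar> > x} = x powr (-\<alpha>) * L x"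
    using tail by blast
  have tlF: "F x = x powr (-\<alpha>) * L x" if "x > 0" for x using tlL that unfolding F_def by simp
  obtain x0 where x0: "x0 > 0" "F x0 > 0" and dbl: "\<And>x. x \<ge> x0 \<Longrightarrow> F x \<le> (2 powr \<alpha> + 1) * F (2*x)"
    using doubling[OF sv tlF] by blast
  obtain C where C: "\<And>n. \<mu>^n * measure M {w \<in> space M. \<bar>X [] w\<bar> > b n} \<le> C"
    using vague_bound[OF \<open>prob_space M\<close> X_meas b_vague b_pos mu_gt1] by blast
  have anti: "F y \<le> F x" if "x \<le> y" for x y
    unfolding F_def using that X_meas by (intro finite_measure_mono) auto
  have lim: "(\<lambda>n. \<mu>^n * (real n)^2 * F (b n * \<theta> / real n)^2) \<longlonglongrightarrow> 0"
  proof -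
    have K1: "(1::real) \<le> 2 powr \<alpha> + 1" by simp
    have Cb: "\<And>n. \<mu>^n * F (b n) \<le> C" unfolding F_def using C by simp
    show ?thesis
      by (rule tail_part[OF anti F0 x0(1) K1 dbl x0(2) mu_gt1 Cb theta_pos b_pos])
  qed
  define d where "d = measure M (space M \<inter> gw_survival N)"
  show ?thesis
  proof (cases "d = 0")
    case True thus ?thesis unfolding d_def[symmetric] by simp
  next
    case False
    hence dpos: "d > 0" unfolding d_def by (simp add: zero_less_measure_iff)
    have lim2: "(\<lambda>n. (\<mu>^n * (real n)^2 * F (b n * \<theta> / real n)^2) / d) \<longlonglongrightarrow> 0 / d"
      by (intro tendsto_divide lim tendsto_const) (use dpos in auto)
    show ?thesis unfolding d_def[symmetric]
    proof (rule tendsto_sandwich[OF _ _ tendsto_const lim2[simplified]])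
      show "\<forall>\<^sub>F n in sequentially. 0 \<le> measure M ((space M - A_event N X b \<theta> n) \<inter> gw_survival N) / d"
        using dpos by simp
      show "\<forall>\<^sub>F n in sequentially. measure M ((space M - A_event N X b \<theta> n) \<inter> gw_survival N) / d
          \<le> (\<mu>^n * (real n)^2 * F (b n * \<theta> / real n)^2) / d"
        using num dpos unfolding tt_def by (intro always_eventually allI divide_right_mono) auto
    qed
  qed
qed

end
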